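(* Let $r \geq 3$ and $n \geq r+1$ be integers. The index $\lambda_1(\Gamma_{1,r-2})$ is the largest root of the polynomial $$f(x) = x^3 + (3-n)x^2 + (3-n-r)x + (n+4)r - (r^2+n+7),$$ and it satisfies $$n-2 \leq \lambda_1(\Gamma_{1,r-2}) < n-1.$$
   Context: A signed graph is a simple graph with each edge assigned a sign $+1$ or $-1$; its adjacency matrix has entry $\sigma(v_iv_j)$ for adjacent $v_i,v_j$ and $0$ otherwise, and its index $\lambda_1$ is the largest eigenvalue of this matrix. $\Gamma_{1,r-2}$ denotes the signed graph on vertices $v_1,\dots,v_n$ obtained from the all-positive complete graph on $\{v_2,\dots,v_n\}$ by adding the vertex $v_1$ joined by one negative edge $v_1v_2$ and by $r-2$ positive edges $v_1v_3,\dots,v_1v_r$ (and no other edges at $v_1$). *)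

theory Defs
  imports "Jordan_Normal_Form.Char_Poly"
begin

text \<open>Vertices v_1,...,v_n are represented by indices 0,...,n-1 (v_k as k-1).
  Adjacency matrix of the signed graph Gamma_{1,r-2} on n vertices:
  all-positive complete graph on v_2..v_n, plus v_1 joined to v_2 negatively
  and to v_3..v_r positively.\<close>
definition Gamma_adj :: "nat \<Rightarrow> nat \<Rightarrow> real mat" where
  "Gamma_adj n r = mat n n (\<lambda>(i, j).
     if i = j then 0
     else if i \<noteq> 0 \<and> j \<noteq> 0 then 1
     else if i = 1 \<or> j = 1 then -1
     else if max i j < r then 1
     else 0)"

definition signed_index :: "real mat \<Rightarrow> real" where
  "signed_index A = Max {x. eigenvalue A x}"

end

theory Submission imports Defs begin

lemma quot_alg:
  fixes s t mu a b x y :: real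
  assumes ne: "mu \<noteq> -1"
  and e1: "mu * a = - b + s * x"
  and e2: "mu * b = - a + s * x + t * y"
  and e3: "(mu + 1) * x = a + b + s * x + t * y"
  and e4: "(mu + 1) * y = b + s * x + t * y"
  and nz: "\<not> (a = 0 \<and> b = 0 \<and> x = 0 \<and> y = 0)"
  shows "(mu - s - t) * (mu^2 + mu - (s + 1)) - (s - 1)^2 = 0"
proof -
  define E where "E = mu + 1"
  have E0: "E \<noteq> 0" using ne unfolding E_def by auto
  have h1: "E * (x - y) = a" using e3 e4 unfolding E_def by (simp add: algebra_simps)
  have h2: "E * (b - y) = - a" using e2 e4 unfolding E_def by (simp add: algebra_simps)
  have h3: "(mu * E - (s + 1)) * a = (s - 1) * E * y"
  proof -
    have "mu * E * a = E * (- b + s * x)" using arg_cong[OF e1, of "\<lambda>z. E*z"] by (simp add: algebra_simps)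
    also have "... = - (E * b) + s * (E * x)" by (simp add: algebra_simps)
    also have "E * b = E * y - a" using h2 by (simp add: algebra_simps)
    also have "E * x = E * y + a" using h1 by (simp add: algebra_simps)
    finally show ?thesis by (simp add: algebra_simps)
  qed
  have h4: "(mu - s - t) * E * y = (s - 1) * a"
  proof -
    have "mu * E * y = E * (b + s * x + (t - 1) * y)" using arg_cong[OF e4, of "\<lambda>z. E*z"] unfolding E_def by (simp add: algebra_simps)
    also have "... = E * b + s * (E * x) + (t - 1) * E * y" by (simp add: algebra_simps)
    also have "E * b = E * y - a" using h2 by (simp add: algebra_simps)
    also have "E * x = E * y + a" using h1 by (simp add: algebra_simps)
    finally show ?thesis by (simp add: algebra_simps)
  qed
  have key: "((mu - s - t) * (mu * E - (s + 1)) - (s - 1)^2) * a = 0"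
  proof -
    have "(mu - s - t) * ((mu * E - (s + 1)) * a) = (s - 1) * ((mu - s - t) * E * y)"
      using arg_cong[OF h3, of "\<lambda>z. (mu - s - t)*z"] by (simp add: algebra_simps)
    also have "... = (s - 1)^2 * a" using arg_cong[OF h4, of "\<lambda>z. (s - 1)*z"] by (simp add: power2_eq_square algebra_simps)
    finally show ?thesis by (simp add: algebra_simps)
  qed
  have mE: "mu * E = mu^2 + mu" unfolding E_def by (simp add: power2_eq_square algebra_simps)
  show ?thesis
  proof (cases "a = 0")
    case False
    then show ?thesis using key mE by simp
  next
    case True
    have xy: "x = y" using h1 E0 True by simp
    have by': "b = y" using h2 E0 True by simp
    have y0: "y \<noteq> 0" using nz True xy by' by auto
    have "(mu - s - t) = 0" using h4 True E0 y0 by simp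
    moreover have "s - 1 = 0" using h3 True E0 y0 by simp
    ultimately show ?thesis by simp
  qed
qed

lemma sum_split4:
  fixes r n :: nat and g :: "nat \<Rightarrow> real"
  assumes "2 \<le> r" "r \<le> n"
  shows "(\<Sum>j\<in>{0..<n}. g j) = g 0 + g 1 + (\<Sum>j\<in>{2..<r}. g j) + (\<Sum>j\<in>{r..<n}. g j)"
proof -
  have "(\<Sum>j\<in>{0..<n}. g j) = (\<Sum>j\<in>{0..<r}. g j) + (\<Sum>j\<in>{r..<n}. g j)"
    using assms sum.atLeastLessThan_concat[of 0 r n g] by simp
  moreover have "(\<Sum>j\<in>{0..<r}. g j) = g 0 + (\<Sum>j\<in>{1..<r}. g j)"
    using assms sum.atLeast_Suc_lessThan[of 0 r g] by simp
  moreover have "(\<Sum>j\<in>{1..<r}. g j) = g 1 + (\<Sum>j\<in>{2..<r}. g j)"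
    using assms sum.atLeast_Suc_lessThan[of 1 r g] by (simp add: numeral_2_eq_2)
  ultimately show ?thesis by simp
qed

lemma sum_skip:
  "finite A \<Longrightarrow> (\<Sum>j\<in>A. if i = j then 0 else g j) = (\<Sum>j\<in>A. g j) - (if i \<in> A then g i else (0::real))"
proof -
  assume fin: "finite A"
  have "(\<Sum>j\<in>A. g j) = (\<Sum>j\<in>A. (if i = j then 0 else g j) + (if i = j then g j else 0))"
    by (rule sum.cong) auto
  also have "... = (\<Sum>j\<in>A. if i = j then 0 else g j) + (if i \<in> A then g i else 0)"
    using fin by (simp add: sum.distrib)
  finally show ?thesis by simp
qed

lemma row_formula:
  fixes v :: "real vec"
  assumes r3: "r \<ge> 3" and nr: "n \<ge> r + 1" and v: "v \<in> carrier_vec n" and i: "i < n"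
  defines "P \<equiv> (\<Sum>j\<in>{2..<r}. v $ j)" and "R \<equiv> (\<Sum>j\<in>{r..<n}. v $ j)"
  shows "(Gamma_adj n r *\<^sub>v v) $ i =
     (if i = 0 then - v $ 1 + P
      else if i = 1 then - v $ 0 + P + R
      else if i < r then v $ 0 + v $ 1 + P + R - v $ i
      else v $ 1 + P + R - v $ i)"
proof -
  define e where "e = (\<lambda>(i::nat, j::nat).
     if i = j then 0
     else if i \<noteq> 0 \<and> j \<noteq> 0 then 1
     else if i = 1 \<or> j = 1 then -1
     else if max i j < r then 1
     else (0::real))"
  have dv: "dim_vec v = n" using v by auto
  have "(Gamma_adj n r *\<^sub>v v) $ i = (\<Sum>j\<in>{0..<n}. e (i, j) * v $ j)"
    using i dv unfolding Gamma_adj_def e_def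
    by (simp add: scalar_prod_def)
  also have "... = e (i,0) * v $ 0 + e (i,1) * v $ 1 + (\<Sum>j\<in>{2..<r}. e (i, j) * v $ j)
       + (\<Sum>j\<in>{r..<n}. e (i, j) * v $ j)"
    by (rule sum_split4) (use r3 nr in auto)
  finally have main: "(Gamma_adj n r *\<^sub>v v) $ i = e (i,0) * v $ 0 + e (i,1) * v $ 1 + (\<Sum>j\<in>{2..<r}. e (i, j) * v $ j)
       + (\<Sum>j\<in>{r..<n}. e (i, j) * v $ j)" .
  show ?thesis
  proof (cases "i = 0")
    case True
    have s1: "(\<Sum>j\<in>{2..<r}. e (i, j) * v $ j) = P" unfolding P_def
      by (rule sum.cong) (auto simp: e_def True)
    have s2: "(\<Sum>j\<in>{r..<n}. e (i, j) * v $ j) = 0"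
      by (rule sum.neutral) (use r3 in \<open>auto simp: e_def True\<close>)
    show ?thesis using main s1 s2 True r3 by (simp add: e_def)
  next
    case i0: False
    show ?thesis
    proof (cases "i = 1")
      case True
      have s1: "(\<Sum>j\<in>{2..<r}. e (i, j) * v $ j) = P" unfolding P_def
        by (rule sum.cong) (auto simp: e_def True)
      have s2: "(\<Sum>j\<in>{r..<n}. e (i, j) * v $ j) = R" unfolding R_def
        by (rule sum.cong) (use r3 in \<open>auto simp: e_def True\<close>)
      show ?thesis using main s1 s2 True r3 by (simp add: e_def)
    next
      case i1: False
      have s1: "(\<Sum>j\<in>{2..<r}. e (i, j) * v $ j) = (\<Sum>j\<in>{2..<r}. if i = j then 0 else v $ j)"
        by (rule sum.cong) (use r3 in \<open>auto simp: e_def i0 i1\<close>)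
      have s2: "(\<Sum>j\<in>{r..<n}. e (i, j) * v $ j) = (\<Sum>j\<in>{r..<n}. if i = j then 0 else v $ j)"
        by (rule sum.cong) (use r3 in \<open>auto simp: e_def i0 i1\<close>)
      have e0: "e (i, 0) = (if i < r then 1 else 0)" using i0 i1 by (simp add: e_def)
      have e1: "e (i, 1) = 1" using i0 i1 by (simp add: e_def)
      have i2: "i \<ge> 2" using i0 i1 by simp
      show ?thesis using main s1 s2 e0 e1 i0 i1 i i2 unfolding P_def R_def
        by (auto simp: sum_skip)
    qed
  qed
qed

theorem proposition1p9:
  fixes n r :: nat
  assumes "r \<ge> 3" and "n \<ge> r + 1"
  defines "f \<equiv> [: real (n + 4) * real r - (real r ^ 2 + real n + 7),
                 3 - real n - real r, 3 - real n, 1 :]"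
  shows "poly f (signed_index (Gamma_adj n r)) = 0
         \<and> (\<forall>x. poly f x = 0 \<longrightarrow> x \<le> signed_index (Gamma_adj n r))
         \<and> real n - 2 \<le> signed_index (Gamma_adj n r)
         \<and> signed_index (Gamma_adj n r) < real n - 1"
proof -
  note r3 = assms(1) and nr = assms(2)
  define s where "s = real r - 2"
  define t where "t = real n - real r"
  define A where "A = Gamma_adj n r"
  have s1: "s \<ge> 1" using r3 unfolding s_def by simp
  have t1: "t \<ge> 1" using nr unfolding t_def by simp
  have fpoly: "poly f z = (z - s - t) * (z^2 + z - (s + 1)) - (s - 1)^2" for z
    by (simp add: f_def s_def t_def algebra_simps power2_eq_square power3_eq_cube)
  have fa: "poly f (s + t) \<le> 0" by (simp add: fpoly)
  have fb: "poly f (s + t + 1) > 0"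
  proof -
    have "(s + t + 1)^2 + (s + t + 1) - (s + 1) \<ge> (s+2)^2 + (s + 2) - (s+1)"
    proof -
      have "(s+2)^2 \<le> (s + t + 1)^2" using s1 t1 by (intro power_mono) auto
      then show ?thesis using t1 by simp
    qed
    then have "(s + t + 1)^2 + (s + t + 1) - (s + 1) - (s - 1)^2 > 0"
      using s1 by (simp add: power2_eq_square algebra_simps)
    then show ?thesis by (simp add: fpoly)
  qed
  obtain lam where lam1: "s + t \<le> lam" and lam2: "lam \<le> s + t + 1" and flam: "poly f lam = 0"
  proof -
    have "continuous_on {s + t..s + t + 1} (poly f)" by (intro continuous_intros)
    then have "\<exists>x\<ge>s + t. x \<le> s + t + 1 \<and> poly f x = 0"
      using IVT'[of "poly f" "s + t" 0 "s + t + 1"] fa fb by auto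
    then show ?thesis using that by blast
  qed
  have lam3: "lam < s + t + 1" using lam2 fb flam by (cases "lam = s + t + 1") auto
  have mono: "poly f y < poly f x" if "s + t \<le> y" "y < x" for x y
  proof -
    have hy: "y^2 + y - (s + 1) > 0"
    proof -
      have "y * y \<ge> 2 * y" using that s1 t1 by (intro mult_right_mono) auto
      then show ?thesis using that s1 t1 unfolding power2_eq_square by linarith
    qed
    have hxy: "y^2 + y - (s + 1) \<le> x^2 + x - (s + 1)"
    proof -
      have "y^2 \<le> x^2" using that s1 t1 by (intro power_mono) auto
      then show ?thesis using that by simp
    qed
    have "(y - s - t) * (y^2 + y - (s + 1)) < (x - s - t) * (y^2 + y - (s + 1))"
      using hy that by (intro mult_strict_right_mono) auto
    also have "... \<le> (x - s - t) * (x^2 + x - (s + 1))"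
      using hxy that by (intro mult_left_mono) auto
    finally show ?thesis by (simp add: fpoly)
  qed
  have roots: "x \<le> lam" if "poly f x = 0" for x
  proof (rule ccontr)
    assume "\<not> x \<le> lam"
    then have "poly f lam < poly f x" using mono lam1 by auto
    then show False using that flam by simp
  qed
  have Aeq: "(A *\<^sub>v w) $ i =
     (if i = 0 then - w $ 1 + (\<Sum>j\<in>{2..<r}. w $ j)
      else if i = 1 then - w $ 0 + (\<Sum>j\<in>{2..<r}. w $ j) + (\<Sum>j\<in>{r..<n}. w $ j)
      else if i < r then w $ 0 + w $ 1 + (\<Sum>j\<in>{2..<r}. w $ j) + (\<Sum>j\<in>{r..<n}. w $ j) - w $ i
      else w $ 1 + (\<Sum>j\<in>{2..<r}. w $ j) + (\<Sum>j\<in>{r..<n}. w $ j) - w $ i)"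
    if "w \<in> carrier_vec n" "i < n" for w i
    unfolding A_def by (rule row_formula[OF r3 nr that])
  have dimA: "dim_row A = n" "dim_col A = n" unfolding A_def Gamma_adj_def by auto
  have cardS: "real (card {2..<r}) = s" using r3 unfolding s_def by (simp add: of_nat_diff)
  have cardT: "real (card {r..<n}) = t" using nr unfolding t_def by (simp add: of_nat_diff)
  have evlam: "eigenvalue A lam"
  proof -
    define E where "E = lam + 1"
    define y0 where "y0 = lam * E - (s + 1)"
    define a where "a = (s - 1) * E"
    define x where "x = y0 + (s - 1)"
    define b where "b = y0 - (s - 1)"
    define v where "v = vec n (\<lambda>j. if j = 0 then a else if j = 1 then b else if j < r then x else y0)"
    have F: "(lam - s - t) * y0 - (s - 1)^2 = 0"
      using flam unfolding fpoly y0_def E_def by (simp add: algebra_simps power2_eq_square)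
    have vc: "v \<in> carrier_vec n" unfolding v_def by simp
    have P: "(\<Sum>j\<in>{2..<r}. v $ j) = s * x"
    proof -
      have "(\<Sum>j\<in>{2..<r}. v $ j) = (\<Sum>j\<in>{2..<r}. x)"
        by (rule sum.cong) (use nr in \<open>auto simp: v_def\<close>)
      then show ?thesis using cardS by simp
    qed
    have R: "(\<Sum>j\<in>{r..<n}. v $ j) = t * y0"
    proof -
      have "(\<Sum>j\<in>{r..<n}. v $ j) = (\<Sum>j\<in>{r..<n}. y0)"
        by (rule sum.cong) (use r3 in \<open>auto simp: v_def\<close>)
      then show ?thesis using cardT by simp
    qed
    have y0pos: "y0 > 0"
    proof -
      have "lam * lam \<ge> 2 * lam" using lam1 s1 t1 by (intro mult_right_mono) auto
      then show ?thesis using lam1 s1 t1 unfolding y0_def E_def distrib_left by linarith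
    qed
    have eig: "A *\<^sub>v v = lam \<cdot>\<^sub>v v"
    proof (rule eq_vecI)
      show "dim_vec (A *\<^sub>v v) = dim_vec (lam \<cdot>\<^sub>v v)" using dimA vc by simp
    next
      fix i assume "i < dim_vec (lam \<cdot>\<^sub>v v)"
      then have i: "i < n" using vc by simp
      have v0: "v $ 0 = a" and v1: "v $ 1 = b" using i r3 nr by (auto simp: v_def)
      have rhs: "(lam \<cdot>\<^sub>v v) $ i = lam * v $ i" using i vc by simp
      have id0: "lam * a - (- b + s * x) = 0"
        unfolding a_def b_def x_def y0_def E_def by (simp add: algebra_simps)
      have id1: "lam * b - (- a + s * x + t * y0) = (lam - s - t) * y0 - (s - 1)^2"
        unfolding a_def b_def x_def y0_def E_def by (simp add: algebra_simps power2_eq_square)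
      have id2: "lam * x - (a + b + s * x + t * y0 - x) = (lam - s - t) * y0 - (s - 1)^2"
        unfolding a_def b_def x_def y0_def E_def by (simp add: algebra_simps power2_eq_square)
      have id3: "lam * y0 - (b + s * x + t * y0 - y0) = (lam - s - t) * y0 - (s - 1)^2"
        unfolding a_def b_def x_def y0_def E_def by (simp add: algebra_simps power2_eq_square)
      show "(A *\<^sub>v v) $ i = (lam \<cdot>\<^sub>v v) $ i"
        unfolding rhs Aeq[OF vc i] P R v0 v1
        using id0 id1 id2 id3 F i by (auto simp: v_def)
    qed
    have "v \<noteq> 0\<^sub>v n"
    proof
      assume "v = 0\<^sub>v n"
      then have "v $ r = 0" using nr by simp
      then show False using y0pos nr r3 by (simp add: v_def)
    qed
    then show ?thesis unfolding eigenvalue_def eigenvector_def using vc eig dimA by auto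
  qed
  have evle: "mu = -1 \<or> poly f mu = 0" if evmu: "eigenvalue A mu" for mu
  proof (cases "mu = -1")
    case True then show ?thesis by simp
  next
    case ne: False
    obtain w where wc: "w \<in> carrier_vec n" and wnz: "w \<noteq> 0\<^sub>v n" and we: "A *\<^sub>v w = mu \<cdot>\<^sub>v w"
      using evmu dimA unfolding eigenvalue_def eigenvector_def by auto
    define a where "a = w $ 0"
    define b where "b = w $ 1"
    define P where "P = (\<Sum>j\<in>{2..<r}. w $ j)"
    define R where "R = (\<Sum>j\<in>{r..<n}. w $ j)"
    define x where "x = (a + b + P + R) / (mu + 1)"
    define y where "y = (b + P + R) / (mu + 1)"
    have E0: "mu + 1 \<noteq> 0" using ne by (simp add: add_eq_0_iff)
    have row: "mu * w $ i = (A *\<^sub>v w) $ i" if "i < n" for i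
      using we that wc by simp
    have wS: "w $ i = x" if "2 \<le> i" "i < r" for i
    proof -
      have "mu * w $ i = a + b + P + R - w $ i"
        using row[of i] Aeq[OF wc, of i] that nr unfolding a_def b_def P_def R_def by simp
      then have "(mu + 1) * w $ i = a + b + P + R" by (simp add: algebra_simps)
      then show ?thesis unfolding x_def using E0 by (simp add: field_simps)
    qed
    have wT: "w $ i = y" if "r \<le> i" "i < n" for i
    proof -
      have "mu * w $ i = b + P + R - w $ i"
        using row[of i] Aeq[OF wc, of i] that r3 unfolding a_def b_def P_def R_def by simp
      then have "(mu + 1) * w $ i = b + P + R" by (simp add: algebra_simps)
      then show ?thesis unfolding y_def using E0 by (simp add: field_simps)
    qed
    have Px: "P = s * x"
    proof -
      have "P = (\<Sum>j\<in>{2..<r}. x)" unfolding P_def by (rule sum.cong) (auto simp: wS)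
      then show ?thesis using cardS by simp
    qed
    have Ry: "R = t * y"
    proof -
      have "R = (\<Sum>j\<in>{r..<n}. y)" unfolding R_def by (rule sum.cong) (auto simp: wT)
      then show ?thesis using cardT by simp
    qed
    have e1: "mu * a = - b + s * x"
      using row[of 0] Aeq[OF wc, of 0] nr Px unfolding a_def b_def P_def by simp
    have e2: "mu * b = - a + s * x + t * y"
      using row[of 1] Aeq[OF wc, of 1] nr r3 Px Ry unfolding a_def b_def P_def R_def by simp
    have e3: "(mu + 1) * x = a + b + s * x + t * y"
      using E0 Px Ry unfolding x_def by simp
    have e4: "(mu + 1) * y = b + s * x + t * y"
      using E0 Px Ry unfolding y_def by simp
    have nz: "\<not> (a = 0 \<and> b = 0 \<and> x = 0 \<and> y = 0)"
    proof
      assume z: "a = 0 \<and> b = 0 \<and> x = 0 \<and> y = 0"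
      have "w = 0\<^sub>v n"
      proof (rule eq_vecI)
        show "dim_vec w = dim_vec (0\<^sub>v n)" using wc by simp
      next
        fix i assume "i < dim_vec (0\<^sub>v n)"
        then have i: "i < n" by simp
        show "w $ i = 0\<^sub>v n $ i"
        proof -
          have "w $ i = 0"
          proof (cases "i = 0")
            case True then show ?thesis using z a_def by simp
          next
            case False
            show ?thesis
            proof (cases "i = 1")
              case True then show ?thesis using z b_def by simp
            next
              case False
              then show ?thesis using \<open>i \<noteq> 0\<close> z wS wT i by (cases "i < r") auto
            qed
          qed
          then show ?thesis using i by simp
        qed
      qed
      then show False using wnz by simp
    qed
    have "(mu - s - t) * (mu^2 + mu - (s + 1)) - (s - 1)^2 = 0"
      by (rule quot_alg[OF ne e1 e2 e3 e4 nz])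
    then show ?thesis by (simp add: fpoly)
  qed
  define S where "S = {x. eigenvalue A x}"
  have fne: "f \<noteq> 0" unfolding f_def by simp
  have finS: "finite S"
  proof (rule finite_subset)
    show "S \<subseteq> insert (-1) {x. poly f x = 0}" using evle unfolding S_def by auto
    show "finite (insert (-1) {x. poly f x = 0})" using poly_roots_finite[OF fne] by simp
  qed
  have idx: "signed_index A = lam"
    unfolding signed_index_def
  proof (rule Max_eqI)
    show "finite {x. eigenvalue A x}" using finS unfolding S_def .
    show "lam \<in> {x. eigenvalue A x}" using evlam by simp
    fix y assume "y \<in> {x. eigenvalue A x}"
    then have "y = -1 \<or> poly f y = 0" using evle by simp
    then show "y \<le> lam" using roots lam1 s1 t1 by auto
  qed
  have "real n - 2 = s + t" "real n - 1 = s + t + 1" unfolding s_def t_def by simp_all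
  then show ?thesis using idx flam roots lam1 lam3 unfolding A_def by simp
qed

end
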